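(* Let $\mathcal{G}=(\mathcal{V},\mathcal{E})$ be an undirected graph without self-loops, with symmetric adjacency matrix $A$ having nonnegative entries, where $A_{ij}>0$ if and only if $\{i,j\}\in\mathcal{E}$ (unweighted graphs being the case of $0/1$ entries). Let $\mathcal{V}_1\subseteq\mathcal{V}$ be a nonempty set of nodes, and let $\mathcal{V}_2\subseteq\mathcal{V}\setminus\mathcal{V}_1$ be a nonempty set of nodes such that every node of $\mathcal{V}_2$ is adjacent to at least one node of $\mathcal{V}_1$. Let $A_1$ be the $|\mathcal{V}_1|\times|\mathcal{V}_2|$ submatrix of $A$ with rows indexed by $\mathcal{V}_1$ and columns indexed by $\mathcal{V}_2$, and $A_2$ the $|\mathcal{V}_2|\times|\mathcal{V}_2|$ submatrix of $A$ indexed by $\mathcal{V}_2$. For each $v\in\mathcal{V}_2$ let $s_v>0$ be the sum of row $v$ of the $|\mathcal{V}_2|\times(|\mathcal{V}_1|+|\mathcal{V}_2|)$ matrix $(A_1^T\,|\,A_2)$, and let $\tilde{A}_1$ (of size $|\mathcal{V}_2|\times|\mathcal{V}_1|$) and $\tilde{A}_2$ (of size $|\mathcal{V}_2|\times|\mathcal{V}_2|$) be obtained from $A_1^T$ and $A_2$ respectively by dividing row $v$ by $s_v$ for each $v\in\mathcal{V}_2$. Let $f\ge 1$, let $Z_1$ be any real $|\mathcal{V}_1|\times f$ matrix, and let $Z^*=(I-\tilde{A}_2)^{-1}\tilde{A}_1 Z_1$ (the matrix $I-\tilde{A}_2$ is invertible). For an arbitrary real $|\mathcal{V}_2|\times f$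 matrix $Z^{(0)}$, define $Z^{(t)}=\tilde{A}_1 Z_1+\tilde{A}_2 Z^{(t-1)}$ for $t\ge 1$. Then $\|Z^{(t)}-Z^*\|_F\to 0$ as $t\to+\infty$ exponentially fast, i.e. there exist constants $C\ge 0$ and $\rho\in[0,1)$ such that $\|Z^{(t)}-Z^*\|_F\le C\rho^t$ for all $t\ge 0$, where $\|\cdot\|_F$ denotes the Frobenius norm.
   Context: This is the propagation step used to infer latent vectors (rows of $Z^{(t)}$) for nodes of $\mathcal{V}_2$ from already-computed latent vectors (rows of $Z_1$) for nodes of $\mathcal{V}_1$, by iterating $Z_2 = \tilde{A}_1 Z_1 + \tilde{A}_2 Z_2$; $Z^*$ is the exact solution of this linear system. *)

theory Defs
  imports "Jordan_Normal_Form.Matrix" "Jordan_Normal_Form.Gauss_Jordan_Elimination"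
begin

definition submat_idx :: "real mat \<Rightarrow> nat set \<Rightarrow> nat set \<Rightarrow> real mat" where
  "submat_idx A R C = (let rs = sorted_list_of_set R; cs = sorted_list_of_set C in
     mat (length rs) (length cs) (\<lambda>(i,j). A $$ (rs ! i, cs ! j)))"

definition A1_mat :: "real mat \<Rightarrow> nat set \<Rightarrow> nat set \<Rightarrow> real mat" where
  "A1_mat A V1 V2 = submat_idx A V1 V2"

definition A2_mat :: "real mat \<Rightarrow> nat set \<Rightarrow> real mat" where
  "A2_mat A V2 = submat_idx A V2 V2"

definition row_sum_s :: "real mat \<Rightarrow> nat set \<Rightarrow> nat set \<Rightarrow> nat \<Rightarrow> real" where
  "row_sum_s A V1 V2 i =
     (\<Sum>j<card V1. transpose_mat (A1_mat A V1 V2) $$ (i,j)) + (\<Sum>j<card V2. A2_mat A V2 $$ (i,j))"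

definition A1_tilde :: "real mat \<Rightarrow> nat set \<Rightarrow> nat set \<Rightarrow> real mat" where
  "A1_tilde A V1 V2 = mat (card V2) (card V1)
     (\<lambda>(i,j). transpose_mat (A1_mat A V1 V2) $$ (i,j) / row_sum_s A V1 V2 i)"

definition A2_tilde :: "real mat \<Rightarrow> nat set \<Rightarrow> nat set \<Rightarrow> real mat" where
  "A2_tilde A V1 V2 = mat (card V2) (card V2)
     (\<lambda>(i,j). A2_mat A V2 $$ (i,j) / row_sum_s A V1 V2 i)"

definition frob_norm :: "real mat \<Rightarrow> real" where
  "frob_norm M = sqrt (\<Sum>i<dim_row M. \<Sum>j<dim_col M. (M $$ (i,j))\<^sup>2)"

end

theory Submission
  imports Defs "Jordan_Normal_Form.Determinant"
begin
lemma contr: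
  fixes B :: "real mat" and x :: "nat \<Rightarrow> real"
  assumes "\<And>j. j < m \<Longrightarrow> B $$ (i,j) \<ge> 0"
    and "(\<Sum>j<m. B $$ (i,j)) \<le> q"
    and "\<And>j. j < m \<Longrightarrow> \<bar>x j\<bar> \<le> c" and "c \<ge> 0"
  shows "\<bar>\<Sum>j<m. B $$ (i,j) * x j\<bar> \<le> q * c"
proof -
  have "\<bar>\<Sum>j<m. B $$ (i,j) * x j\<bar> \<le> (\<Sum>j<m. \<bar>B $$ (i,j) * x j\<bar>)" by (rule sum_abs)
  also have "\<dots> \<le> (\<Sum>j<m. B $$ (i,j) * c)"
    by (rule sum_mono) (simp add: abs_mult assms(1) assms(3) mult_left_mono)
  also have "\<dots> = (\<Sum>j<m. B $$ (i,j)) * c" by (simp add: sum_distrib_right)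
  also have "\<dots> \<le> q * c" using assms by (auto intro: mult_right_mono)
  finally show ?thesis .
qed

theorem theorem1:
  fixes n f :: nat and A :: "real mat" and V1 V2 :: "nat set"
    and Z1 :: "real mat" and Z :: "nat \<Rightarrow> real mat"
  assumes A_dim: "A \<in> carrier_mat n n"
    and A_sym: "\<And>i j. i < n \<Longrightarrow> j < n \<Longrightarrow> A $$ (i,j) = A $$ (j,i)"
    and A_nonneg: "\<And>i j. i < n \<Longrightarrow> j < n \<Longrightarrow> A $$ (i,j) \<ge> 0"
    and no_loops: "\<And>i. i < n \<Longrightarrow> A $$ (i,i) = 0"
    and V1_sub: "V1 \<subseteq> {0..<n}" and V1_ne: "V1 \<noteq> {}"
    and V2_sub: "V2 \<subseteq> {0..<n} - V1" and V2_ne: "V2 \<noteq> {}"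
    and V2_adj: "\<forall>v\<in>V2. \<exists>u\<in>V1. A $$ (u,v) > 0"
    and f_pos: "f \<ge> 1"
    and Z1_dim: "Z1 \<in> carrier_mat (card V1) f"
    and Z0_dim: "Z 0 \<in> carrier_mat (card V2) f"
    and Z_rec: "\<And>t. Z (Suc t) = A1_tilde A V1 V2 * Z1 + A2_tilde A V1 V2 * Z t"
  shows "invertible_mat (1\<^sub>m (card V2) - A2_tilde A V1 V2) \<and>
    (let Zstar = the (mat_inverse (1\<^sub>m (card V2) - A2_tilde A V1 V2)) * A1_tilde A V1 V2 * Z1
     in \<exists>C \<rho>. C \<ge> 0 \<and> 0 \<le> \<rho> \<and> \<rho> < 1 \<and>
          (\<forall>t. frob_norm (Z t - Zstar) \<le> C * \<rho> ^ t))"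
proof -
  define m where "m = card V2"
  define k where "k = card V1"
  define rs where "rs = sorted_list_of_set V1"
  define cs where "cs = sorted_list_of_set V2"
  define Bt where "Bt = A2_tilde A V1 V2"
  define At where "At = A1_tilde A V1 V2"
  have fin1: "finite V1" using V1_sub finite_subset by blast
  have fin2: "finite V2" using V2_sub finite_subset by blast
  have lrs: "length rs = k" and srs: "set rs = V1" using fin1 by (auto simp: rs_def k_def)
  have lcs: "length cs = m" and scs: "set cs = V2" using fin2 by (auto simp: cs_def m_def)
  have m0: "m > 0" using fin2 V2_ne by (simp add: m_def card_gt_0_iff)
  have rsn: "rs ! j < n" if "j < k" for j using nth_mem[of j rs] lrs srs V1_sub that by auto
  have csn: "cs ! i < n" if "i < m" for i using nth_mem[of i cs] lcs scs V2_sub that by auto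
  define r1 where "r1 i = (\<Sum>j<k. A $$ (rs ! j, cs ! i))" for i
  define r2 where "r2 i = (\<Sum>j<m. A $$ (cs ! i, cs ! j))" for i
  define s where "s i = r1 i + r2 i" for i
  have A1e: "A1_mat A V1 V2 = mat k m (\<lambda>(i,j). A $$ (rs ! i, cs ! j))"
    unfolding A1_mat_def submat_idx_def Let_def using lrs lcs by (simp add: rs_def cs_def)
  have A2e: "A2_mat A V2 = mat m m (\<lambda>(i,j). A $$ (cs ! i, cs ! j))"
    unfolding A2_mat_def submat_idx_def Let_def using lcs by (simp add: cs_def)
  have rs_eq: "row_sum_s A V1 V2 i = s i" if "i < m" for i
    unfolding row_sum_s_def s_def r1_def r2_def A1e A2e k_def[symmetric] m_def[symmetric]
    using that by simp
  have Bt_dim: "Bt \<in> carrier_mat m m" by (simp add: Bt_def A2_tilde_def m_def)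
  have At_dim: "At \<in> carrier_mat m k" by (simp add: At_def A1_tilde_def m_def k_def)
  have Bt_e: "Bt $$ (i,j) = A $$ (cs ! i, cs ! j) / s i" if "i < m" "j < m" for i j
    using that rs_eq unfolding Bt_def A2_tilde_def A2e m_def[symmetric] by simp
  have r1_pos: "r1 i > 0" if "i < m" for i
  proof -
    have "cs ! i \<in> V2" using that lcs scs nth_mem by blast
    then obtain u where u: "u \<in> V1" "A $$ (u, cs ! i) > 0" using V2_adj by blast
    then obtain j where j: "j < k" "rs ! j = u" using srs lrs by (metis in_set_conv_nth)
    have "A $$ (rs ! j, cs ! i) \<le> r1 i" unfolding r1_def
      by (rule member_le_sum[where f="\<lambda>j. A $$ (rs ! j, cs ! i)"]) 
         (use j that rsn csn A_nonneg in auto)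
    with u j show ?thesis by simp
  qed
  have r2_nn: "r2 i \<ge> 0" if "i < m" for i
    unfolding r2_def using that csn A_nonneg by (auto intro: sum_nonneg)
  have s_pos: "s i > 0" if "i < m" for i using r1_pos r2_nn that s_def
    by (simp add: add_pos_nonneg)
  have Bt_nn: "Bt $$ (i,j) \<ge> 0" if "i < m" "j < m" for i j
    using Bt_e[OF that] s_pos[OF that(1)] A_nonneg csn that by simp
  have Bt_row: "(\<Sum>j<m. Bt $$ (i,j)) = r2 i / s i" if "i < m" for i
    using Bt_e that by (simp add: r2_def sum_divide_distrib)
  define q where "q = Max ((\<lambda>i. r2 i / s i) ` {..<m})"
  have q_ge: "r2 i / s i \<le> q" if "i < m" for i unfolding q_def using that by simp
  have q_lt: "q < 1"
  proof -
    have "q \<in> (\<lambda>i. r2 i / s i) ` {..<m}" unfolding q_def using m0 by (intro Max_in) auto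
    then obtain i where i: "i < m" "q = r2 i / s i" by auto
    then show ?thesis using s_pos[OF i(1)] r1_pos[OF i(1)] by (simp add: s_def)
  qed
  have q_nn: "q \<ge> 0" using q_ge[OF m0] r2_nn[OF m0] s_pos[OF m0] by (meson divide_nonneg_pos order_trans)
  have Bt_rowq: "(\<Sum>j<m. Bt $$ (i,j)) \<le> q" if "i < m" for i using Bt_row q_ge that by simp
  define M where "M = 1\<^sub>m m - Bt"
  have M_dim: "M \<in> carrier_mat m m" unfolding M_def using Bt_dim by (rule minus_carrier_mat)
  have det: "det M \<noteq> 0"
  proof
    assume "det M = 0"
    then obtain v where v: "v \<in> carrier_vec m" "v \<noteq> 0\<^sub>v m" "M *\<^sub>v v = 0\<^sub>v m"
      using det_0_iff_vec_prod_zero_field[OF M_dim] by blast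
    define c where "c = Max ((\<lambda>j. \<bar>v $ j\<bar>) ` {..<m})"
    have c_ge: "\<bar>v $ j\<bar> \<le> c" if "j < m" for j unfolding c_def using that by simp
    have "c \<in> (\<lambda>j. \<bar>v $ j\<bar>) ` {..<m}" unfolding c_def using m0 by (intro Max_in) auto
    then obtain i0 where i0: "i0 < m" "c = \<bar>v $ i0\<bar>" by auto
    have eq: "v $ i = (\<Sum>j<m. Bt $$ (i,j) * v $ j)" if "i < m" for i
    proof -
      have "(M *\<^sub>v v) $ i = 0" using v that by simp
      moreover have "(M *\<^sub>v v) $ i = v $ i - (\<Sum>j<m. Bt $$ (i,j) * v $ j)"
        using v(1) that Bt_dim unfolding M_def
        by (simp add: minus_mult_distrib_mat_vec scalar_prod_def atLeast0LessThan left_diff_distrib sum_subtractf if_distrib[of "\<lambda>x. x * _"])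
      ultimately show ?thesis by simp
    qed
    have "c \<le> q * c" using contr[of m Bt i0 q "\<lambda>j. v $ j" c] eq[OF i0(1)] i0 Bt_nn Bt_rowq c_ge
      by auto
    hence "c = 0" using q_lt i0 by (smt (verit) mult_le_cancel_right1)
    hence "v = 0\<^sub>v m" using c_ge v(1) by (intro eq_vecI) auto
    with v show False by simp
  qed
  have U: "M \<in> Units (ring_mat TYPE(real) m ())" by (rule det_non_zero_imp_unit[OF M_dim det])
  have "mat_inverse M \<noteq> None"
  proof
    assume "mat_inverse M = None"
    from mat_inverse(1)[OF M_dim this, where b="()"] U show False by simp
  qed
  then obtain Binv where Bi: "mat_inverse M = Some Binv" by auto
  from mat_inverse(2)[OF M_dim Bi] have MB: "M * Binv = 1\<^sub>m m" "Binv * M = 1\<^sub>m m"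
    and Bi_dim: "Binv \<in> carrier_mat m m" by auto
  have inv: "invertible_mat M" unfolding invertible_mat_def inverts_mat_def square_mat.simps
    using MB M_dim Bi_dim by auto
  define Zs where "Zs = Binv * At * Z1"
  have Zs_dim: "Zs \<in> carrier_mat m f" using Bi_dim At_dim Z1_dim by (simp add: Zs_def k_def)
  have MZ: "M * Zs = At * Z1"
  proof -
    have Z1k: "Z1 \<in> carrier_mat k f" using Z1_dim k_def by simp
    have "Binv * At * Z1 = Binv * (At * Z1)" by (rule assoc_mult_mat[OF Bi_dim At_dim Z1k])
    hence "M * Zs = M * (Binv * (At * Z1))" unfolding Zs_def by simp
    also have "\<dots> = (M * Binv) * (At * Z1)"
      by (rule assoc_mult_mat[symmetric, OF M_dim Bi_dim mult_carrier_mat[OF At_dim Z1k]])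
    finally have "M * Zs = (M * Binv) * (At * Z1)" .
    also have "\<dots> = At * Z1" using MB At_dim Z1_dim k_def by simp
    finally show ?thesis .
  qed
  have Zs_eq: "Zs $$ (i,kk) - (\<Sum>j<m. Bt $$ (i,j) * Zs $$ (j,kk)) = (At * Z1) $$ (i,kk)"
    if "i < m" "kk < f" for i kk
  proof -
    have "(M * Zs) $$ (i,kk) = Zs $$ (i,kk) - (\<Sum>j<m. Bt $$ (i,j) * Zs $$ (j,kk))"
      unfolding M_def using that Bt_dim Zs_dim
      by (simp add: minus_mult_distrib_mat[of _ m m] scalar_prod_def atLeast0LessThan)
    with MZ show ?thesis by simp
  qed
  define c0 where "c0 = (\<Sum>i<m. \<Sum>kk<f. \<bar>Z 0 $$ (i,kk) - Zs $$ (i,kk)\<bar>)"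
  have c0_nn: "c0 \<ge> 0" unfolding c0_def by (intro sum_nonneg) auto
  have claim: "Z t \<in> carrier_mat m f \<and> (\<forall>i<m. \<forall>kk<f. \<bar>Z t $$ (i,kk) - Zs $$ (i,kk)\<bar> \<le> q ^ t * c0)" for t
  proof (induction t)
    case 0
    have "\<bar>Z 0 $$ (i,kk) - Zs $$ (i,kk)\<bar> \<le> c0" if "i < m" "kk < f" for i kk
    proof -
      have "\<bar>Z 0 $$ (i,kk) - Zs $$ (i,kk)\<bar> \<le> (\<Sum>kk<f. \<bar>Z 0 $$ (i,kk) - Zs $$ (i,kk)\<bar>)"
        by (rule member_le_sum[where f="\<lambda>kk. \<bar>Z 0 $$ (i,kk) - Zs $$ (i,kk)\<bar>"]) (use that in auto)
      also have "\<dots> \<le> c0" unfolding c0_def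
        by (rule member_le_sum[where f="\<lambda>i. \<Sum>kk<f. \<bar>Z 0 $$ (i,kk) - Zs $$ (i,kk)\<bar>"]) (use that in \<open>auto intro: sum_nonneg\<close>)
      finally show ?thesis .
    qed
    then show ?case using Z0_dim m_def by simp
  next
    case (Suc t)
    hence Zt: "Z t \<in> carrier_mat m f" by simp
    have dimS: "Z (Suc t) \<in> carrier_mat m f" using Z_rec[of t] Zt At_dim Bt_dim Z1_dim k_def
      by (simp add: At_def Bt_def)
    have "\<bar>Z (Suc t) $$ (i,kk) - Zs $$ (i,kk)\<bar> \<le> q ^ Suc t * c0" if "i < m" "kk < f" for i kk
    proof -
      have "Z (Suc t) $$ (i,kk) = (At * Z1) $$ (i,kk) + (\<Sum>j<m. Bt $$ (i,j) * Z t $$ (j,kk))"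
        using Z_rec[of t] that Zt At_dim Bt_dim Z1_dim k_def
        by (simp add: At_def Bt_def scalar_prod_def atLeast0LessThan)
      hence "Z (Suc t) $$ (i,kk) - Zs $$ (i,kk) = (\<Sum>j<m. Bt $$ (i,j) * (Z t $$ (j,kk) - Zs $$ (j,kk)))"
        using Zs_eq[OF that] by (simp add: right_diff_distrib sum_subtractf)
      moreover have "\<bar>\<Sum>j<m. Bt $$ (i,j) * (Z t $$ (j,kk) - Zs $$ (j,kk))\<bar> \<le> q * (q ^ t * c0)"
        by (rule contr) (use Bt_nn Bt_rowq Suc that c0_nn q_nn in auto)
      ultimately show ?thesis by simp
    qed
    with dimS show ?case by simp
  qed
  have bound: "frob_norm (Z t - Zs) \<le> (sqrt (real (m * f)) * c0) * q ^ t" for t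
  proof -
    have Zt: "Z t \<in> carrier_mat m f" using claim by blast
    have "frob_norm (Z t - Zs) = sqrt (\<Sum>i<m. \<Sum>kk<f. (Z t $$ (i,kk) - Zs $$ (i,kk))\<^sup>2)"
      unfolding frob_norm_def using Zt Zs_dim by simp
    also have "\<dots> \<le> sqrt (\<Sum>i<m. \<Sum>kk<f. (q ^ t * c0)\<^sup>2)"
    proof (intro real_sqrt_le_mono sum_mono)
      fix i kk assume "i \<in> {..<m}" "kk \<in> {..<f}"
      hence "\<bar>Z t $$ (i,kk) - Zs $$ (i,kk)\<bar> \<le> q ^ t * c0" using claim by auto
      thus "(Z t $$ (i,kk) - Zs $$ (i,kk))\<^sup>2 \<le> (q ^ t * c0)\<^sup>2"
        by (metis abs_ge_zero order_trans power2_abs power_mono)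
    qed
    also have "\<dots> = sqrt (real (m * f)) * (q ^ t * c0)"
      using q_nn c0_nn by (simp add: real_sqrt_mult)
    finally show ?thesis by (simp add: algebra_simps)
  qed
  have ZsE: "the (mat_inverse M) * At * Z1 = Zs" using Bi Zs_def by simp
  have ex: "\<exists>C \<rho>. C \<ge> 0 \<and> 0 \<le> \<rho> \<and> \<rho> < 1 \<and> (\<forall>t. frob_norm (Z t - Zs) \<le> C * \<rho> ^ t)"
    by (rule exI[of _ "sqrt (real (m * f)) * c0"], rule exI[of _ q]) (use bound q_nn q_lt c0_nn in auto)
  show ?thesis
    unfolding Let_def M_def[symmetric] Bt_def[symmetric] At_def[symmetric] m_def[symmetric] ZsE
    using inv ex by blast
qed
end
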